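(* Let $m,n,c$ be positive integers, let items and categories be as in the context, and for each category $o\in\{1,\ldots,c\}$ let $n_o$ be the number of items in category $o$ (so $\sum_{o}n_o=m$). Let $\eta>0$, $\beta\ge 0$ and put $\lambda=\eta\beta/m$ and $a_l=2n_l+\lambda n_l^2$ for $l=1,\ldots,c$. Consider user vectors $\mathbf{u}_i(t)\in\mathbb{R}^c$, $i=1,\ldots,n$, $t\in\{0,1,2,\ldots\}$, evolving by $$\mathbf{u}_i(t+1)=\Big(\mathbf{I}_c+\frac{\eta\beta}{m}\mathbf{V}\mathbf{V}^T\Big)\mathbf{u}_i(t)$$ (the user dynamics with $\epsilon=0$, $\gamma=1$), where $\mathbf{V}=[\mathbf{v}_1,\ldots,\mathbf{v}_m]$. Fix a time $t$ and suppose there is an index $k\in\{1,\ldots,c\}$ with $\sum_{l\neq k}a_l>0$ such that for every pair of users $(i,j)$, $$u_i^{(k)}(t)\,u_j^{(k)}(t)\ \ge\ \frac{\|\mathbf{u}_i(t)\|_2\,\|\mathbf{u}_j(t)\|_2}{\sqrt{1+\Big(\frac{a_k}{\sum_{l\neq k}a_l}\Big)^2}}.$$ Then: (i) for every pair $(i,j)$, $\mathbf{u}_i(t+1)^T\mathbf{u}_j(t+1)\ge\mathbf{u}_i(t)^T\mathbf{u}_j(t)$; (ii) if moreover $n_k=\max_{o\in\{1,\ldots,c\}}n_o$, then for every pair $(i,j)$ and every positive integer $\tau$, $\mathbf{u}_i(t+\tau)^T\mathbf{u}_j(t+\tau)\ge\mathbf{u}_i(t+\tau-1)^T\mathbf{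u}_j(t+\tau-1)$.
   Context: There are $m$ items and $c$ categories; each item belongs to exactly one category, and the vector of an item $j$ in category $o$ is $\mathbf{v}_j=\mathbf{e}_o\in\mathbb{R}^c$, the $o$-th standard basis vector. $u_i^{(k)}(t)$ denotes the $k$-th coordinate of $\mathbf{u}_i(t)$. $\mathbf{I}_c$ is the $c\times c$ identity. *)

theory Defs
  imports "HOL-Analysis.Analysis"
begin

text \<open>Items are the elements of a finite type 'm (so m = CARD('m)), categories are the
elements of a finite type 'c (so c = CARD('c)); cat j is the category of item j.\<close>

definition item_vec :: "('m \<Rightarrow> 'c::finite) \<Rightarrow> 'm \<Rightarrow> real ^ 'c" where
  "item_vec cat j = axis (cat j) 1"

definition item_matrix :: "('m::finite \<Rightarrow> 'c::finite) \<Rightarrow> real ^ 'm ^ 'c" where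
  "item_matrix cat = (\<chi> a j. item_vec cat j $ a)"

definition ncat :: "('m::finite \<Rightarrow> 'c) \<Rightarrow> 'c \<Rightarrow> nat" where
  "ncat cat q = card {j. cat j = q}"

definition acoef :: "('m::finite \<Rightarrow> 'c) \<Rightarrow> real \<Rightarrow> 'c \<Rightarrow> real" where
  "acoef cat lam l = 2 * real (ncat cat l) + lam * (real (ncat cat l))^2"

end

theory Submission
  imports Defs
begin

lemma VVt: "(item_matrix cat ** transpose (item_matrix cat)) $ a $ b = (if a = b then real (ncat cat a) else 0)"
proof -
  have "(item_matrix cat ** transpose (item_matrix cat)) $ a $ b = (\<Sum>j\<in>UNIV. if cat j = a \<and> cat j = b then 1 else 0)"
    unfolding matrix_matrix_mult_def item_matrix_def transpose_def item_vec_def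
    by (auto simp: axis_def intro!: sum.cong)
  also have "\<dots> = (if a = b then real (ncat cat a) else 0)"
    unfolding ncat_def by (auto simp: sum.If_cases)
  finally show ?thesis .
qed

lemma Mstep:
  fixes cat :: "'m::finite \<Rightarrow> 'c::finite"
  shows "((mat 1 + L *\<^sub>R (item_matrix cat ** transpose (item_matrix cat))) *v x) $ q
     = (1 + L * real (ncat cat q)) * x $ q"
proof -
  have "((mat 1 + L *\<^sub>R (item_matrix cat ** transpose (item_matrix cat))) *v x) $ q
     = (\<Sum>j\<in>UNIV. (if q = j then 1 + L * real (ncat cat q) else 0) * x $ j)"
    unfolding matrix_vector_mult_def vec_lambda_beta by (intro sum.cong) (auto simp: mat_def VVt)
  also have "\<dots> = (1 + L * real (ncat cat q)) * x $ q"
    by (simp add: if_distrib[of "\<lambda>z. z * _"] cong: if_cong)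
  finally show ?thesis .
qed

lemma norm2_vec: "(norm (x::real^'c))^2 = (\<Sum>q\<in>UNIV. x$q * x$q)"
  by (simp add: power2_norm_eq_inner inner_vec_def)

lemma scal:
  fixes A B p q X Y r :: real
  assumes A0: "A \<ge> 0" and B0: "B \<ge> 0" and X0: "X \<ge> 0" and Y0: "Y \<ge> 0" and r0: "r \<ge> 0"
    and Ax: "A^2 = p^2 + X^2" and By: "B^2 = q^2 + Y^2"
    and P: "p * q \<ge> A * B / sqrt (1 + r^2)"
  shows "X * Y \<le> r * (p * q)"
proof -
  have sq1: "sqrt (1 + r^2) > 0" by (intro real_sqrt_gt_zero) (simp add: add_pos_nonneg)
  have sq2: "sqrt (1 + r^2) \<le> 1 + r"
  proof (rule real_le_lsqrt)
    show "1 + r^2 \<le> (1 + r)^2" using r0 by (simp add: power2_sum)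
  qed (use r0 in auto)
  have "0 \<le> A * B / sqrt (1 + r^2)" using A0 B0 sq1 by simp
  hence P0: "p * q \<ge> 0" using P by linarith
  have "A * B \<le> sqrt (1 + r^2) * (p * q)" using P sq1 by (simp add: field_simps)
  also have "\<dots> \<le> (1 + r) * (p * q)" using sq2 P0 by (rule mult_right_mono)
  finally have ABr: "A * B \<le> (1 + r) * (p * q)" .
  have pA: "\<bar>p\<bar> \<le> A" by (rule power2_le_imp_le) (simp_all add: Ax A0)
  have qB: "\<bar>q\<bar> \<le> B" by (rule power2_le_imp_le) (simp_all add: By B0)
  have "\<bar>p\<bar>*\<bar>q\<bar> \<le> A*B" using pA qB by (intro mult_mono) auto
  hence pq: "p * q \<le> A * B" using P0 by (simp add: abs_mult[symmetric])
  have amgm: "A^2 * q^2 + B^2 * p^2 \<ge> 2 * (A*B) * (p*q)"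
  proof -
    have e: "(A*\<bar>q\<bar> - B*\<bar>p\<bar>)^2 = A^2 * \<bar>q\<bar>^2 + B^2 * \<bar>p\<bar>^2 - 2 * (A*B) * (\<bar>p\<bar>*\<bar>q\<bar>)"
      by algebra
    have "0 \<le> (A*\<bar>q\<bar> - B*\<bar>p\<bar>)^2" by (rule zero_le_power2)
    hence "2 * (A*B) * (\<bar>p\<bar>*\<bar>q\<bar>) \<le> A^2 * \<bar>q\<bar>^2 + B^2 * \<bar>p\<bar>^2" unfolding e by linarith
    moreover have "\<bar>p\<bar>*\<bar>q\<bar> = p*q" using P0 by (simp add: abs_mult[symmetric])
    ultimately show ?thesis by simp
  qed
  have "(X*Y)^2 \<le> (A*B - p*q)^2"
  proof -
    have x2: "X^2 = A^2 - p^2" using Ax by linarith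
    have y2: "Y^2 = B^2 - q^2" using By by linarith
    have "(X*Y)^2 = X^2 * Y^2" by (rule power_mult_distrib)
    also have "\<dots> = (A^2 - p^2) * (B^2 - q^2)" unfolding x2 y2 ..
    finally have e1: "(X*Y)^2 = (A^2 - p^2) * (B^2 - q^2)" .
    have e2: "(A*B - p*q)^2 - (A^2 - p^2) * (B^2 - q^2) = A^2 * q^2 + B^2 * p^2 - 2 * (A*B) * (p*q)"
      by algebra
    show ?thesis unfolding e1 using e2 amgm by linarith
  qed
  hence XY: "X*Y \<le> A*B - p*q" by (rule power2_le_imp_le) (use pq in auto)
  also have "\<dots> \<le> r * (p*q)" using ABr by (simp add: distrib_right)
  finally show ?thesis .
qed

lemma key:
  fixes x y :: "real^'c" and a :: "'c \<Rightarrow> real"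
  assumes anon: "\<And>l. a l \<ge> 0" and Spos: "(\<Sum>l\<in>UNIV - {k}. a l) > 0"
    and al: "x $ k * y $ k \<ge> norm x * norm y / sqrt (1 + (a k / (\<Sum>l\<in>UNIV - {k}. a l))^2)"
  shows "(\<Sum>q\<in>UNIV. a q * (x $ q * y $ q)) \<ge> 0"
proof -
  define S where "S = (\<Sum>l\<in>UNIV - {k}. a l)"
  define r where "r = a k / S"
  define p where "p = x $ k"
  define q where "q = y $ k"
  define X where "X = sqrt (\<Sum>l\<in>UNIV - {k}. x$l * x$l)"
  define Y where "Y = sqrt (\<Sum>l\<in>UNIV - {k}. y$l * y$l)"
  have S0: "S > 0" using Spos S_def by simp
  have r0: "r \<ge> 0" using anon S0 r_def by simp
  have sX: "X^2 = (\<Sum>l\<in>UNIV - {k}. x$l * x$l)" unfolding X_def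
    by (rule real_sqrt_pow2) (auto intro: sum_nonneg)
  have sY: "Y^2 = (\<Sum>l\<in>UNIV - {k}. y$l * y$l)" unfolding Y_def
    by (rule real_sqrt_pow2) (auto intro: sum_nonneg)
  have Ax: "(norm x)^2 = p^2 + X^2"
    unfolding norm2_vec sX p_def
    by (subst sum.remove[of UNIV k]) (auto simp: power2_eq_square)
  have By: "(norm y)^2 = q^2 + Y^2"
    unfolding norm2_vec sY q_def
    by (subst sum.remove[of UNIV k]) (auto simp: power2_eq_square)
  have X0: "X \<ge> 0" "Y \<ge> 0" unfolding X_def Y_def by (auto intro: sum_nonneg)
  have P: "p * q \<ge> norm x * norm y / sqrt (1 + r^2)" using al unfolding p_def q_def r_def S_def .
  have XY: "X * Y \<le> r * (p * q)"
    by (rule scal[OF norm_ge_zero norm_ge_zero X0 r0 Ax By P])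
  have xl: "\<bar>x$l\<bar> \<le> X" if "l \<noteq> k" for l
  proof -
    have "x$l * x$l \<le> (\<Sum>l\<in>UNIV - {k}. x$l * x$l)" using that
      by (intro member_le_sum) auto
    hence "sqrt (x$l * x$l) \<le> X" unfolding X_def by (rule real_sqrt_le_mono)
    thus ?thesis by simp
  qed
  have yl: "\<bar>y$l\<bar> \<le> Y" if "l \<noteq> k" for l
  proof -
    have "y$l * y$l \<le> (\<Sum>l\<in>UNIV - {k}. y$l * y$l)" using that
      by (intro member_le_sum) auto
    hence "sqrt (y$l * y$l) \<le> Y" unfolding Y_def by (rule real_sqrt_le_mono)
    thus ?thesis by simp
  qed
  have "(\<Sum>l\<in>UNIV - {k}. a l * (x $ l * y $ l)) \<ge> (\<Sum>l\<in>UNIV - {k}. - (a l * (X * Y)))"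
  proof (rule sum_mono)
    fix l assume "l \<in> UNIV - {k}"
    hence "\<bar>x$l\<bar> * \<bar>y$l\<bar> \<le> X * Y" using xl yl X0 by (intro mult_mono) auto
    hence "\<bar>x$l * y$l\<bar> \<le> X * Y" by (simp add: abs_mult)
    hence "a l * \<bar>x$l * y$l\<bar> \<le> a l * (X*Y)" using anon by (simp add: mult_left_mono)
    moreover have "a l * (- \<bar>x$l * y$l\<bar>) \<le> a l * (x$l * y$l)"
      using anon[of l] by (intro mult_left_mono) auto
    ultimately show "- (a l * (X * Y)) \<le> a l * (x $ l * y $ l)" by linarith
  qed
  also have "(\<Sum>l\<in>UNIV - {k}. - (a l * (X * Y))) = - (S * (X*Y))"
    by (simp add: S_def sum_distrib_right sum_negf)
  finally have rest: "(\<Sum>l\<in>UNIV - {k}. a l * (x $ l * y $ l)) \<ge> - (S * (X*Y))" .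
  have "S * (X*Y) \<le> S * (r * (p*q))" using XY S0 by simp
  also have "\<dots> = a k * (p*q)" using S0 r_def by simp
  finally have "S*(X*Y) \<le> a k * (p*q)" .
  moreover have "(\<Sum>q\<in>UNIV. a q * (x $ q * y $ q)) = a k * (p*q) + (\<Sum>l\<in>UNIV - {k}. a l * (x $ l * y $ l))"
    unfolding p_def q_def by (subst sum.remove[of UNIV k]) auto
  ultimately show ?thesis using rest by linarith
qed

lemma norm_scale_le:
  fixes x x' :: "real^'c" and d :: "'c \<Rightarrow> real"
  assumes d: "\<And>q. 0 \<le> d q \<and> d q \<le> D" and x': "\<And>q. x' $ q = d q * x $ q"
  shows "norm x' \<le> D * norm x"
proof -
  have D0: "D \<ge> 0" using d by (meson order_trans)
  have "(norm x')^2 = (\<Sum>q\<in>UNIV. (d q)^2 * (x$q * x$q))" unfolding norm2_vec x'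
    by (simp add: power2_eq_square algebra_simps)
  also have "\<dots> \<le> (\<Sum>q\<in>UNIV. D^2 * (x$q * x$q))"
    by (intro sum_mono mult_right_mono power_mono) (use d in auto)
  also have "\<dots> = (D * norm x)^2" by (simp add: norm2_vec power_mult_distrib sum_distrib_left)
  finally show ?thesis by (rule power2_le_imp_le) (use D0 in simp)
qed

lemma persist:
  fixes x y x' y' :: "real^'c" and d :: "'c \<Rightarrow> real"
  assumes d: "\<And>q. 0 \<le> d q \<and> d q \<le> d k" and x': "\<And>q. x' $ q = d q * x $ q"
    and y': "\<And>q. y' $ q = d q * y $ q" and c: "c > 0"
    and al: "x $ k * y $ k \<ge> norm x * norm y / c"
  shows "x' $ k * y' $ k \<ge> norm x' * norm y' / c"
proof -
  have nx: "norm x' \<le> d k * norm x" by (rule norm_scale_le[OF d x'])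
  have ny: "norm y' \<le> d k * norm y" by (rule norm_scale_le[OF d y'])
  have dk: "d k \<ge> 0" using d by auto
  have "norm x' * norm y' \<le> (d k * norm x) * (d k * norm y)"
    using nx ny dk by (intro mult_mono) auto
  hence "norm x' * norm y' / c \<le> (d k * norm x) * (d k * norm y) / c"
    using c by (simp add: divide_right_mono)
  also have "\<dots> = (d k)^2 * (norm x * norm y / c)" by (simp add: power2_eq_square)
  also have "\<dots> \<le> (d k)^2 * (x $ k * y $ k)" using al by (intro mult_left_mono) auto
  also have "\<dots> = x' $ k * y' $ k" by (simp add: x' y' power2_eq_square)
  finally show ?thesis .
qed

lemma inner_step:
  fixes cat :: "'m::finite \<Rightarrow> 'c::finite"
  shows "((mat 1 + L *\<^sub>R (item_matrix cat ** transpose (item_matrix cat))) *v x) \<bullet>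
         ((mat 1 + L *\<^sub>R (item_matrix cat ** transpose (item_matrix cat))) *v y) - x \<bullet> y
       = L * (\<Sum>q\<in>UNIV. acoef cat L q * (x $ q * y $ q))"
proof -
  have "((mat 1 + L *\<^sub>R (item_matrix cat ** transpose (item_matrix cat))) *v x) \<bullet>
         ((mat 1 + L *\<^sub>R (item_matrix cat ** transpose (item_matrix cat))) *v y) - x \<bullet> y
     = (\<Sum>q\<in>UNIV. ((1 + L * real (ncat cat q)) * x $ q) * ((1 + L * real (ncat cat q)) * y $ q) - x$q * y$q)"
    by (simp add: inner_vec_def Mstep sum_subtractf)
  also have "\<dots> = (\<Sum>q\<in>UNIV. L * (acoef cat L q * (x $ q * y $ q)))"
    by (intro sum.cong refl) (simp add: acoef_def power2_eq_square algebra_simps)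
  also have "\<dots> = L * (\<Sum>q\<in>UNIV. acoef cat L q * (x $ q * y $ q))" by (simp add: sum_distrib_left)
  finally show ?thesis .
qed

lemma acoef_nonneg: "L \<ge> 0 \<Longrightarrow> acoef cat L q \<ge> 0"
  unfolding acoef_def by simp

theorem corollary1:
  fixes cat :: "'m::finite \<Rightarrow> 'c::finite"
    and n :: nat and eta beta :: real
    and u :: "nat \<Rightarrow> nat \<Rightarrow> real ^ 'c"
    and t :: nat and k :: 'c
  assumes n_pos: "0 < n"
    and eta_pos: "0 < eta" and beta_nonneg: "0 \<le> beta"
    and dyn: "\<And>i s. i < n \<Longrightarrow>
       u i (Suc s) = (mat 1 + (eta * beta / real CARD('m)) *\<^sub>R
                       (item_matrix cat ** transpose (item_matrix cat))) *v u i s"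
    and sum_pos: "(\<Sum>l\<in>UNIV - {k}. acoef cat (eta * beta / real CARD('m)) l) > 0"
    and align: "\<And>i j. i < n \<Longrightarrow> j < n \<Longrightarrow>
       u i t $ k * u j t $ k \<ge> norm (u i t) * norm (u j t) /
         sqrt (1 + (acoef cat (eta * beta / real CARD('m)) k /
              (\<Sum>l\<in>UNIV - {k}. acoef cat (eta * beta / real CARD('m)) l))^2)"
  shows "(\<forall>i<n. \<forall>j<n. u i (t + 1) \<bullet> u j (t + 1) \<ge> u i t \<bullet> u j t) \<and>
         (ncat cat k = (MAX q. ncat cat q) \<longrightarrow>
           (\<forall>i<n. \<forall>j<n. \<forall>\<tau>::nat. 0 < \<tau> \<longrightarrow>
              u i (t + \<tau>) \<bullet> u j (t + \<tau>) \<ge> u i (t + \<tau> - 1) \<bullet> u j (t + \<tau> - 1)))"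
proof -
  define L where "L = eta * beta / real CARD('m)"
  define M where "M = mat 1 + L *\<^sub>R (item_matrix cat ** transpose (item_matrix cat))"
  define c where "c = sqrt (1 + (acoef cat L k / (\<Sum>l\<in>UNIV - {k}. acoef cat L l))^2)"
  have L0: "L \<ge> 0" unfolding L_def using eta_pos beta_nonneg by simp
  have c0: "c > 0" unfolding c_def by (intro real_sqrt_gt_zero) (simp add: add_pos_nonneg)
  have dynM: "\<And>i s. i < n \<Longrightarrow> u i (Suc s) = M *v u i s" using dyn unfolding M_def L_def by simp
  have Mc: "(M *v x) $ q = (1 + L * real (ncat cat q)) * x $ q" for x :: "real^'c" and q
    unfolding M_def by (rule Mstep)
  have mono: "(M *v x) \<bullet> (M *v y) \<ge> x \<bullet> y" if al: "x $ k * y $ k \<ge> norm x * norm y / c" for x y :: "real^'c"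
  proof -
    have "(\<Sum>q\<in>UNIV. acoef cat L q * (x $ q * y $ q)) \<ge> 0"
      by (rule key[where k = k]) (use acoef_nonneg[OF L0] sum_pos al in \<open>auto simp: L_def c_def\<close>)
    hence "L * (\<Sum>q\<in>UNIV. acoef cat L q * (x $ q * y $ q)) \<ge> 0" using L0 by simp
    thus ?thesis using inner_step[of L cat x y] unfolding M_def by linarith
  qed
  have alt: "\<And>i j. i < n \<Longrightarrow> j < n \<Longrightarrow> u i t $ k * u j t $ k \<ge> norm (u i t) * norm (u j t) / c"
    using align unfolding c_def L_def by simp
  have part1: "\<forall>i<n. \<forall>j<n. u i (t + 1) \<bullet> u j (t + 1) \<ge> u i t \<bullet> u j t"
    using mono alt dynM by simp
  have part2: "\<forall>i<n. \<forall>j<n. \<forall>\<tau>::nat. 0 < \<tau> \<longrightarrow>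
              u i (t + \<tau>) \<bullet> u j (t + \<tau>) \<ge> u i (t + \<tau> - 1) \<bullet> u j (t + \<tau> - 1)"
    if kmax: "ncat cat k = (MAX q. ncat cat q)"
  proof -
    have dk: "0 \<le> 1 + L * real (ncat cat q) \<and> 1 + L * real (ncat cat q) \<le> 1 + L * real (ncat cat k)" for q
    proof -
      have "ncat cat q \<le> ncat cat k" unfolding kmax by (rule Max_ge) auto
      thus ?thesis using L0 by (simp add: mult_left_mono)
    qed
    have allal: "\<forall>i<n. \<forall>j<n. u i (t + s) $ k * u j (t + s) $ k \<ge> norm (u i (t + s)) * norm (u j (t + s)) / c" for s
    proof (induction s)
      case 0 thus ?case using alt by simp
    next
      case (Suc s)
      show ?case
      proof (intro allI impI)
        fix i j assume ij: "i < n" "j < n"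
        show "u i (t + Suc s) $ k * u j (t + Suc s) $ k \<ge> norm (u i (t + Suc s)) * norm (u j (t + Suc s)) / c"
          using persist[where d="\<lambda>q. 1 + L * real (ncat cat q)" and k=k and c=c and x'="u i (t + Suc s)" and x="u i (t+s)"
              and y'="u j (t + Suc s)" and y="u j (t+s)", OF dk _ _ c0]
            Suc.IH ij dynM Mc by simp
      qed
    qed
    show ?thesis
    proof (intro allI impI)
      fix i j :: nat and \<tau> :: nat assume ij: "i < n" "j < n" and tp: "0 < \<tau>"
      then obtain s where s: "\<tau> = Suc s" using gr0_implies_Suc by blast
      show "u i (t + \<tau>) \<bullet> u j (t + \<tau>) \<ge> u i (t + \<tau> - 1) \<bullet> u j (t + \<tau> - 1)"
        using mono[of "u i (t+s)" "u j (t+s)"] allal[of s] ij dynM s by simp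
    qed
  qed
  show ?thesis using part1 part2 by blast
qed

end
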